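(* Let $\mathcal{X}$ be a nonempty convex subset of $\mathbb{R}^n$ and $\mathbf{F}:\mathcal{X}\to I(\mathbb{R})$ a convex interval-valued function. If $\mathbf{F}$ is $gH$-differentiable at $\bar{x}\in\mathcal{X}$, then $\partial\mathbf{F}(\bar{x})=\{\nabla\mathbf{F}(\bar{x})\}$.
   Context: $I(\mathbb{R})$: nonempty compact intervals $\mathbf{A}=[\underline{a},\overline{a}]$; $\mathbf{A}\oplus\mathbf{B}=[\underline{a}+\underline{b},\overline{a}+\overline{b}]$; $\lambda\odot\mathbf{A}=[\min\{\lambda\underline{a},\lambda\overline{a}\},\max\{\lambda\underline{a},\lambda\overline{a}\}]$; $\mathbf{A}\ominus_{gH}\mathbf{B}=[\min\{\underline{a}-\underline{b},\overline{a}-\overline{b}\},\max\{\underline{a}-\underline{b},\overline{a}-\overline{b}\}]$; $\mathbf{0}=[0,0]$; $\mathbf{A}\preceq\mathbf{B}$ iff $\underline{a}\le\underline{b}$ and $\overline{a}\le\overline{b}$; limits w.r.t. $\|\mathbf{A}\|_{I(\mathbb{R})}=\max\{|\underline{a}|,|\overline{a}|\}$. $d^T\odot\widehat{\mathbf{A}}=\bigoplus_{i}d_i\odot\mathbf{A}_i$ for $d\in\mathbb{R}^n$, $\widehat{\mathbf{A}}\in I(\mathbb{R})^n$. Convex IVF: $\mathbf{F}(\lambda x_1+(1-\lambda)x_2)\preceq\lambda\odot\mathbf{F}(x_1)\oplus(1-\lambda)\odot\mathbf{F}(x_2)$. $gH$-derivative of a one-variable IVF: $\mathbf{G}'(t)=\lim_{s\to0}\frac1s\odot(\mathbf{G}(t+s)\ominus_{gH}\mathbf{G}(t))$;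 $D_i\mathbf{F}(\bar{x})$ is the $gH$-derivative at $\bar{x}_i$ of $x_i\mapsto\mathbf{F}(\bar{x}_1,\dots,x_i,\dots,\bar{x}_n)$; $\nabla\mathbf{F}(\bar{x})=(D_1\mathbf{F}(\bar{x}),\dots,D_n\mathbf{F}(\bar{x}))^T$. $\mathbf{F}$ is $gH$-differentiable at $\bar{x}$ if there exist $\widehat{\mathbf{A}}\in I(\mathbb{R})^n$, an interval-valued $\mathbf{E}(\mathbf{F}(\bar{x});d)\to\mathbf{0}$ as $\|d\|\to0$, and $\delta>0$ with $\mathbf{F}(\bar{x}+d)\ominus_{gH}\mathbf{F}(\bar{x})=d^T\odot\widehat{\mathbf{A}}\oplus\|d\|\odot\mathbf{E}(\mathbf{F}(\bar{x});d)$ for $\|d\|<\delta$. $gH$-subgradient at $\bar{x}$: $\widehat{\mathbf{G}}\in I(\mathbb{R})^n$ with $(x-\bar{x})^T\odot\widehat{\mathbf{G}}\preceq\mathbf{F}(x)\ominus_{gH}\mathbf{F}(\bar{x})$ for all $x\in\mathcal{X}$; $\partial\mathbf{F}(\bar{x})$ is the set of all of them. *)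

theory Defs
  imports "HOL-Analysis.Analysis"
begin

text \<open>Compact intervals [a_lo, a_hi] are represented as pairs (a_lo, a_hi) with a_lo \<le> a_hi.\<close>
type_synonym ivl = "real \<times> real"

definition ivl_ok :: "ivl \<Rightarrow> bool" where
  "ivl_ok A \<longleftrightarrow> fst A \<le> snd A"

definition ivl_add :: "ivl \<Rightarrow> ivl \<Rightarrow> ivl" where
  "ivl_add A B = (fst A + fst B, snd A + snd B)"

definition ivl_scale :: "real \<Rightarrow> ivl \<Rightarrow> ivl" where
  "ivl_scale l A = (min (l * fst A) (l * snd A), max (l * fst A) (l * snd A))"

definition ivl_gHsub :: "ivl \<Rightarrow> ivl \<Rightarrow> ivl" where
  "ivl_gHsub A B = (min (fst A - fst B) (snd A - snd B), max (fst A - fst B) (snd A - snd B))"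

definition ivl_le :: "ivl \<Rightarrow> ivl \<Rightarrow> bool" where
  "ivl_le A B \<longleftrightarrow> fst A \<le> fst B \<and> snd A \<le> snd B"

definition ivl_norm :: "ivl \<Rightarrow> real" where
  "ivl_norm A = max \<bar>fst A\<bar> \<bar>snd A\<bar>"

definition ivl_dot :: "real^'n \<Rightarrow> ivl^'n \<Rightarrow> ivl" where
  "ivl_dot d A = Finite_Set.fold (\<lambda>i acc. ivl_add (ivl_scale (d $ i) (A $ i)) acc) (0, 0) UNIV"

definition convex_ivf :: "(real^'n) set \<Rightarrow> (real^'n \<Rightarrow> ivl) \<Rightarrow> bool" where
  "convex_ivf X F \<longleftrightarrow> (\<forall>x1\<in>X. \<forall>x2\<in>X. \<forall>l::real. 0 \<le> l \<and> l \<le> 1 \<longrightarrow>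
      ivl_le (F (l *\<^sub>R x1 + (1 - l) *\<^sub>R x2))
             (ivl_add (ivl_scale l (F x1)) (ivl_scale (1 - l) (F x2))))"

definition gH_has_deriv :: "(real \<Rightarrow> ivl) \<Rightarrow> real \<Rightarrow> ivl \<Rightarrow> bool" where
  "gH_has_deriv G t L \<longleftrightarrow> (\<forall>e>0. \<exists>h>0. \<forall>s. s \<noteq> 0 \<and> \<bar>s\<bar> < h \<longrightarrow>
      ivl_norm (ivl_gHsub (ivl_scale (1 / s) (ivl_gHsub (G (t + s)) (G t))) L) < e)"

definition gH_partial :: "(real^'n \<Rightarrow> ivl) \<Rightarrow> real^'n \<Rightarrow> 'n \<Rightarrow> ivl" where
  "gH_partial F xb i = (THE L. ivl_ok L \<and>
      gH_has_deriv (\<lambda>t. F (\<chi> j. if j = i then t else xb $ j)) (xb $ i) L)"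

definition gH_gradient :: "(real^'n \<Rightarrow> ivl) \<Rightarrow> real^'n \<Rightarrow> ivl^'n" where
  "gH_gradient F xb = (\<chi> i. gH_partial F xb i)"

text \<open>gH-differentiability at xb; F is required to be defined (i.e. xb+d \<in> X) for \<parallel>d\<parallel> < \<delta>.\<close>
definition gH_differentiable :: "(real^'n) set \<Rightarrow> (real^'n \<Rightarrow> ivl) \<Rightarrow> real^'n \<Rightarrow> bool" where
  "gH_differentiable X F xb \<longleftrightarrow> (\<exists>(A::ivl^'n) (E::real^'n \<Rightarrow> ivl) (\<delta>::real).
      (\<forall>i. ivl_ok (A $ i)) \<and> \<delta> > 0 \<and>
      (\<forall>d. norm d < \<delta> \<longrightarrow> xb + d \<in> X \<and> ivl_ok (E d)) \<and>
      (\<forall>e>0. \<exists>h>0. \<forall>d. 0 < norm d \<and> norm d < h \<longrightarrow> ivl_norm (E d) < e) \<and>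
      (\<forall>d. norm d < \<delta> \<longrightarrow>
         ivl_gHsub (F (xb + d)) (F xb) = ivl_add (ivl_dot d A) (ivl_scale (norm d) (E d))))"

definition gH_subdiff :: "(real^'n) set \<Rightarrow> (real^'n \<Rightarrow> ivl) \<Rightarrow> real^'n \<Rightarrow> (ivl^'n) set" where
  "gH_subdiff X F xb = {G. (\<forall>i. ivl_ok (G $ i)) \<and>
      (\<forall>x\<in>X. ivl_le (ivl_dot (x - xb) G) (ivl_gHsub (F x) (F xb)))}"

end

theory Submission imports Defs begin
lemma ivl_add_plus: "ivl_add A B = A + B" by (simp add: ivl_add_def prod_eq_iff)
lemma ivl_dot_sum: "ivl_dot d A = (\<Sum>i\<in>UNIV. ivl_scale (d$i) (A$i))"
  unfolding ivl_dot_def ivl_add_plus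
  by (simp add: sum.eq_fold comp_def zero_prod_def)
lemma ivl_dot_fst: "fst (ivl_dot d A) = (\<Sum>i\<in>UNIV. min (d$i * fst (A$i)) (d$i * snd (A$i)))"
  by (simp add: ivl_dot_sum fst_sum ivl_scale_def)
lemma ivl_dot_snd: "snd (ivl_dot d A) = (\<Sum>i\<in>UNIV. max (d$i * fst (A$i)) (d$i * snd (A$i)))"
  by (simp add: ivl_dot_sum snd_sum ivl_scale_def)
lemma ivl_dot_axis: "ivl_dot (s *\<^sub>R axis i 1) A = ivl_scale s (A$i)"
proof -
  have "(\<Sum>j\<in>UNIV. ivl_scale ((s *\<^sub>R axis i 1)$j) (A$j)) = (\<Sum>j\<in>UNIV. if j = i then ivl_scale s (A$i) else 0)"
    by (rule sum.cong) (auto simp: axis_def ivl_scale_def zero_prod_def)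
  thus ?thesis by (simp add: ivl_dot_sum)
qed
lemma ivl_dot_zero: "ivl_dot 0 A = (0,0)"
  by (simp add: ivl_dot_fst ivl_dot_snd prod_eq_iff)
lemma ivl_dot_fst_hom: "t \<ge> 0 \<Longrightarrow> fst (ivl_dot (t *\<^sub>R d) A) = t * fst (ivl_dot d A)"
  by (simp add: ivl_dot_fst sum_distrib_left min_mult_distrib_left mult.assoc)
lemma ivl_dot_snd_hom: "t \<ge> 0 \<Longrightarrow> snd (ivl_dot (t *\<^sub>R d) A) = t * snd (ivl_dot d A)"
  by (simp add: ivl_dot_snd sum_distrib_left max_mult_distrib_left mult.assoc)
lemma norm_ax: "norm (s *\<^sub>R axis i (1::real)) = \<bar>s\<bar>" by simp
lemma vec_ax: "(\<chi> j. if j = i then xb$i + s else xb$j) = xb + s *\<^sub>R axis i 1"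
  by (simp add: vec_eq_iff axis_def)
lemma deriv_aux:
  fixes s a1 a2 e1 e2 :: real
  assumes "s \<noteq> 0" "a1 \<le> a2" "e1 \<le> e2"
  shows "ivl_norm (ivl_gHsub (ivl_scale (1/s) (min (s*a1) (s*a2) + \<bar>s\<bar>*e1, max (s*a1) (s*a2) + \<bar>s\<bar>*e2)) (a1,a2)) \<le> max \<bar>e1\<bar> \<bar>e2\<bar>"
proof (cases "s > 0")
  case True
  have m: "min (s*a1) (s*a2) = s*a1" "max (s*a1) (s*a2) = s*a2" "\<bar>s\<bar> = s"
    using True assms by (auto simp: mult_left_mono)
  have "1/s * (s*a1 + s*e1) = a1 + e1" "1/s * (s*a2 + s*e2) = a2 + e2" using True
    by (auto simp: field_simps)
  then show ?thesis unfolding m using assms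
    by (simp add: ivl_norm_def ivl_gHsub_def ivl_scale_def)
next
  case False
  hence s: "s < 0" using assms by auto
  have m: "min (s*a1) (s*a2) = s*a2" "max (s*a1) (s*a2) = s*a1" "\<bar>s\<bar> = -s"
    using s assms by (auto simp: mult_left_mono_neg)
  have "1/s * (s*a2 + -s*e1) = a2 - e1" "1/s * (s*a1 + -s*e2) = a1 - e2" using s
    by (auto simp: field_simps)
  then show ?thesis unfolding m using assms
    by (simp add: ivl_norm_def ivl_gHsub_def ivl_scale_def)
qed

lemma gHnorm_ge: "\<bar>fst X - fst L\<bar> \<le> ivl_norm (ivl_gHsub X L)" "\<bar>snd X - snd L\<bar> \<le> ivl_norm (ivl_gHsub X L)"
  by (auto simp: ivl_norm_def ivl_gHsub_def)

lemma gH_deriv_unique: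
  assumes "gH_has_deriv G t L1" "gH_has_deriv G t L2"
  shows "L1 = L2"
proof (rule ccontr)
  assume ne: "L1 \<noteq> L2"
  define e where "e = max \<bar>fst L1 - fst L2\<bar> \<bar>snd L1 - snd L2\<bar> / 2"
  have e: "e > 0" using ne unfolding e_def by (auto simp: prod_eq_iff)
  obtain h1 where h1: "h1 > 0" "\<forall>s. s \<noteq> 0 \<and> \<bar>s\<bar> < h1 \<longrightarrow>
      ivl_norm (ivl_gHsub (ivl_scale (1 / s) (ivl_gHsub (G (t + s)) (G t))) L1) < e"
    using assms(1) e unfolding gH_has_deriv_def by blast
  obtain h2 where h2: "h2 > 0" "\<forall>s. s \<noteq> 0 \<and> \<bar>s\<bar> < h2 \<longrightarrow>
      ivl_norm (ivl_gHsub (ivl_scale (1 / s) (ivl_gHsub (G (t + s)) (G t))) L2) < e"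
    using assms(2) e unfolding gH_has_deriv_def by blast
  define s where "s = min h1 h2 / 2"
  have s: "s \<noteq> 0" "\<bar>s\<bar> < h1" "\<bar>s\<bar> < h2" using h1 h2 unfolding s_def by auto
  define X where "X = ivl_scale (1 / s) (ivl_gHsub (G (t + s)) (G t))"
  have a: "ivl_norm (ivl_gHsub X L1) < e" "ivl_norm (ivl_gHsub X L2) < e"
    using h1 h2 s unfolding X_def by auto
  have "\<bar>fst L1 - fst L2\<bar> < 2*e" "\<bar>snd L1 - snd L2\<bar> < 2*e"
    using a gHnorm_ge[of X L1] gHnorm_ge[of X L2] by linarith+
  thus False unfolding e_def by (auto simp: max_def split: if_splits)
qed

lemma canc1: "(s::real) > 0 \<Longrightarrow> s*x \<le> s*y + s*z \<Longrightarrow> x \<le> y + z"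
  by (metis distrib_left mult_le_cancel_left_pos)
lemma canc2: "(s::real) > 0 \<Longrightarrow> -s*x \<le> -s*y + s*z \<Longrightarrow> y - z \<le> x"
proof -
  assume "s > 0" "-s*x \<le> -s*y + s*z"
  hence "s * (y - z) \<le> s * x" by (simp add: algebra_simps)
  thus ?thesis using \<open>s > 0\<close> by simp
qed

theorem mainTheorem6:
  fixes X :: "(real^'n) set" and F :: "real^'n \<Rightarrow> ivl" and xb :: "real^'n"
  assumes "X \<noteq> {}" and "convex X"
    and "\<forall>x\<in>X. ivl_ok (F x)"
    and "convex_ivf X F"
    and "xb \<in> X"
    and "gH_differentiable X F xb"
  shows "gH_subdiff X F xb = {gH_gradient F xb}"
proof -
  obtain A :: "ivl^'n" and E :: "real^'n \<Rightarrow> ivl" and \<delta> :: real where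
    Aok: "\<forall>i. ivl_ok (A $ i)" and dpos: "\<delta> > 0" and
    inX: "\<forall>d. norm d < \<delta> \<longrightarrow> xb + d \<in> X \<and> ivl_ok (E d)" and
    Elim: "\<forall>e>0. \<exists>h>0. \<forall>d. 0 < norm d \<and> norm d < h \<longrightarrow> ivl_norm (E d) < e" and
    rep: "\<forall>d. norm d < \<delta> \<longrightarrow>
         ivl_gHsub (F (xb + d)) (F xb) = ivl_add (ivl_dot d A) (ivl_scale (norm d) (E d))"
    using assms(6) unfolding gH_differentiable_def by blast
  have R: "fst (ivl_gHsub (F (xb + d)) (F xb)) = fst (ivl_dot d A) + norm d * fst (E d) \<and>
           snd (ivl_gHsub (F (xb + d)) (F xb)) = snd (ivl_dot d A) + norm d * snd (E d)"
    if "norm d < \<delta>" for d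
  proof -
    have "ivl_ok (E d)" using inX that by blast
    hence "ivl_scale (norm d) (E d) = (norm d * fst (E d), norm d * snd (E d))"
      by (auto simp: ivl_scale_def ivl_ok_def mult_left_mono)
    thus ?thesis using rep that by (simp add: ivl_add_def)
  qed
  have Ebound: "\<bar>fst (E d)\<bar> \<le> ivl_norm (E d)" "\<bar>snd (E d)\<bar> \<le> ivl_norm (E d)" for d
    by (auto simp: ivl_norm_def)
  have axR: "fst (ivl_gHsub (F (xb + s *\<^sub>R axis i 1)) (F xb)) = min (s * fst (A$i)) (s * snd (A$i)) + \<bar>s\<bar> * fst (E (s *\<^sub>R axis i 1)) \<and>
             snd (ivl_gHsub (F (xb + s *\<^sub>R axis i 1)) (F xb)) = max (s * fst (A$i)) (s * snd (A$i)) + \<bar>s\<bar> * snd (E (s *\<^sub>R axis i 1))"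
    if "\<bar>s\<bar> < \<delta>" for s i
    using R[of "s *\<^sub>R axis i 1"] that by (simp add: ivl_dot_axis ivl_scale_def)
  have grad: "gH_gradient F xb = A"
  proof -
    have "gH_partial F xb i = A $ i" for i
    proof -
      let ?G = "\<lambda>t. F (\<chi> j. if j = i then t else xb $ j)"
      have G: "?G (xb $ i + s) = F (xb + s *\<^sub>R axis i 1)" for s
        using vec_ax[of i xb s] by simp
      have G0: "?G (xb $ i) = F xb"
      proof -
        have "(\<chi> j. if j = i then xb $ i else xb $ j) = xb" by (simp add: vec_eq_iff)
        thus ?thesis by simp
      qed
      have D: "gH_has_deriv ?G (xb $ i) (A $ i)"
        unfolding gH_has_deriv_def
      proof (intro allI impI)
        fix e :: real assume e: "e > 0"
        obtain h where h: "h > 0" "\<forall>d. 0 < norm d \<and> norm d < h \<longrightarrow> ivl_norm (E d) < e"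
          using Elim e by blast
        show "\<exists>h>0. \<forall>s. s \<noteq> 0 \<and> \<bar>s\<bar> < h \<longrightarrow>
          ivl_norm (ivl_gHsub (ivl_scale (1 / s) (ivl_gHsub (?G (xb $ i + s)) (?G (xb $ i)))) (A $ i)) < e"
        proof (intro exI[of _ "min h \<delta>"] conjI allI impI)
          show "0 < min h \<delta>" using h dpos by simp
          fix s :: real assume s: "s \<noteq> 0 \<and> \<bar>s\<bar> < min h \<delta>"
          let ?d = "s *\<^sub>R axis i (1::real)"
          have ok: "ivl_ok (E ?d)" using inX s by simp
          have eq: "ivl_gHsub (?G (xb $ i + s)) (?G (xb $ i)) =
            (min (s * fst (A$i)) (s * snd (A$i)) + \<bar>s\<bar> * fst (E ?d), max (s * fst (A$i)) (s * snd (A$i)) + \<bar>s\<bar> * snd (E ?d))"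
            unfolding G G0 using axR[of s i] s by (simp add: prod_eq_iff)
          have "ivl_norm (ivl_gHsub (ivl_scale (1 / s) (ivl_gHsub (?G (xb $ i + s)) (?G (xb $ i)))) (A $ i))
              \<le> max \<bar>fst (E ?d)\<bar> \<bar>snd (E ?d)\<bar>"
            unfolding eq using deriv_aux[of s "fst (A$i)" "snd (A$i)" "fst (E ?d)" "snd (E ?d)"]
              s Aok ok by (simp add: ivl_ok_def)
          also have "\<dots> = ivl_norm (E ?d)" by (simp add: ivl_norm_def)
          also have "\<dots> < e" using h s by simp
          finally show "ivl_norm (ivl_gHsub (ivl_scale (1 / s) (ivl_gHsub (?G (xb $ i + s)) (?G (xb $ i)))) (A $ i)) < e" .
        qed
      qed
      show ?thesis unfolding gH_partial_def
        apply (rule the_equality)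
        using D Aok gH_deriv_unique by blast+
    qed
    thus ?thesis by (simp add: gH_gradient_def vec_eq_iff)
  qed
  have inA: "A \<in> gH_subdiff X F xb"
    unfolding gH_subdiff_def
  proof (intro CollectI conjI allI ballI)
    show "ivl_ok (A $ i)" for i using Aok by blast
    fix x assume x: "x \<in> X"
    define d where "d = x - xb"
    show "ivl_le (ivl_dot (x - xb) A) (ivl_gHsub (F x) (F xb))"
    proof (cases "d = 0")
      case True
      hence "x = xb" unfolding d_def by simp
      thus ?thesis by (simp add: ivl_dot_zero ivl_le_def ivl_gHsub_def)
    next
      case False
      hence nd: "norm d > 0" by simp
      define D1 where "D1 = fst (F x) - fst (F xb)"
      define D2 where "D2 = snd (F x) - snd (F xb)"
      define L where "L = fst (ivl_dot d A)"
      define U where "U = snd (ivl_dot d A)"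
      have key: "L + norm d * fst (E (t *\<^sub>R d)) \<le> min D1 D2 \<and> U + norm d * snd (E (t *\<^sub>R d)) \<le> max D1 D2"
        if t: "0 < t" "t \<le> 1" "t * norm d < \<delta>" for t
      proof -
        have y: "t *\<^sub>R x + (1 - t) *\<^sub>R xb = xb + t *\<^sub>R d"
          unfolding d_def by (simp add: algebra_simps)
        have cv: "ivl_le (F (xb + t *\<^sub>R d)) (ivl_add (ivl_scale t (F x)) (ivl_scale (1 - t) (F xb)))"
          using assms(4) x assms(5) t unfolding convex_ivf_def y[symmetric] by auto
        have okx: "fst (F x) \<le> snd (F x)" and okb: "fst (F xb) \<le> snd (F xb)"
          using assms(3) x assms(5) by (auto simp: ivl_ok_def)
        have sc1: "ivl_scale t (F x) = (t * fst (F x), t * snd (F x))"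
          using okx t by (auto simp: ivl_scale_def mult_left_mono)
        have sc2: "ivl_scale (1-t) (F xb) = ((1-t) * fst (F xb), (1-t) * snd (F xb))"
          using okb t by (auto simp: ivl_scale_def mult_left_mono)
        have c1: "fst (F (xb + t *\<^sub>R d)) - fst (F xb) \<le> t * D1"
          and c2: "snd (F (xb + t *\<^sub>R d)) - snd (F xb) \<le> t * D2"
          using cv unfolding ivl_le_def ivl_add_def sc1 sc2 D1_def D2_def
          by (auto simp: algebra_simps)
        have nt: "norm (t *\<^sub>R d) = t * norm d" using t by simp
        have Rt: "min (fst (F (xb + t *\<^sub>R d)) - fst (F xb)) (snd (F (xb + t *\<^sub>R d)) - snd (F xb))
                 = t * L + t * norm d * fst (E (t *\<^sub>R d))"
                 "max (fst (F (xb + t *\<^sub>R d)) - fst (F xb)) (snd (F (xb + t *\<^sub>R d)) - snd (F xb))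
                 = t * U + t * norm d * snd (E (t *\<^sub>R d))"
          using R[of "t *\<^sub>R d"] t nt ivl_dot_fst_hom[of t d A] ivl_dot_snd_hom[of t d A]
          unfolding L_def U_def by (auto simp: ivl_gHsub_def)
        have "t * (L + norm d * fst (E (t *\<^sub>R d))) \<le> t * min D1 D2"
        proof -
          have "t * (L + norm d * fst (E (t *\<^sub>R d))) = min (fst (F (xb + t *\<^sub>R d)) - fst (F xb)) (snd (F (xb + t *\<^sub>R d)) - snd (F xb))"
            using Rt(1) by (simp add: algebra_simps)
          also have "\<dots> \<le> min (t * D1) (t * D2)" using c1 c2 by (rule min.mono)
          also have "\<dots> = t * min D1 D2" using t by (simp add: min_mult_distrib_left)
          finally show ?thesis .
        qed
        moreover have "t * (U + norm d * snd (E (t *\<^sub>R d))) \<le> t * max D1 D2"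
        proof -
          have "t * (U + norm d * snd (E (t *\<^sub>R d))) = max (fst (F (xb + t *\<^sub>R d)) - fst (F xb)) (snd (F (xb + t *\<^sub>R d)) - snd (F xb))"
            using Rt(2) by (simp add: algebra_simps)
          also have "\<dots> \<le> max (t * D1) (t * D2)" using c1 c2 by (rule max.mono)
          also have "\<dots> = t * max D1 D2" using t by (simp add: max_mult_distrib_left)
          finally show ?thesis .
        qed
        ultimately show ?thesis using t by simp
      qed
      have lim: "\<exists>t. 0 < t \<and> t \<le> 1 \<and> t * norm d < \<delta> \<and> ivl_norm (E (t *\<^sub>R d)) < \<epsilon>"
        if epos: "\<epsilon> > 0" for \<epsilon>
      proof -
        obtain h where h: "h > 0" "\<forall>d. 0 < norm d \<and> norm d < h \<longrightarrow> ivl_norm (E d) < \<epsilon>"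
          using Elim epos by blast
        define t where "t = min 1 (min h \<delta> / (2 * norm d))"
        have t0: "0 < t" "t \<le> 1" using h dpos nd unfolding t_def by auto
        have "t * norm d \<le> min h \<delta> / (2 * norm d) * norm d"
          unfolding t_def using nd by (intro mult_right_mono) auto
        also have "\<dots> = min h \<delta> / 2" using nd by simp
        finally have tb: "t * norm d < h" "t * norm d < \<delta>" using h dpos by auto
        have "ivl_norm (E (t *\<^sub>R d)) < \<epsilon>" using h(2) tb t0 nd by simp
        thus ?thesis using t0 tb by blast
      qed
      have L: "L \<le> min D1 D2"
      proof (rule field_le_epsilon)
        fix \<epsilon> :: real assume e: "\<epsilon> > 0"
        obtain t where t: "0 < t" "t \<le> 1" "t * norm d < \<delta>" "ivl_norm (E (t *\<^sub>R d)) < \<epsilon> / norm d"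
          using lim[of "\<epsilon> / norm d"] e nd by auto
        have "norm d * \<bar>fst (E (t *\<^sub>R d))\<bar> \<le> norm d * (\<epsilon> / norm d)"
          using Ebound(1)[of "t *\<^sub>R d"] t(4) nd by (intro mult_left_mono) auto
        hence "norm d * \<bar>fst (E (t *\<^sub>R d))\<bar> \<le> \<epsilon>" using nd by simp
        moreover have "norm d * - fst (E (t *\<^sub>R d)) \<le> norm d * \<bar>fst (E (t *\<^sub>R d))\<bar>"
          by (rule mult_left_mono[OF abs_ge_minus_self]) simp
        ultimately show "L \<le> min D1 D2 + \<epsilon>" using key[OF t(1-3)] by linarith
      qed
      have U: "U \<le> max D1 D2"
      proof (rule field_le_epsilon)
        fix \<epsilon> :: real assume e: "\<epsilon> > 0"
        obtain t where t: "0 < t" "t \<le> 1" "t * norm d < \<delta>" "ivl_norm (E (t *\<^sub>R d)) < \<epsilon> / norm d"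
          using lim[of "\<epsilon> / norm d"] e nd by auto
        have "norm d * \<bar>snd (E (t *\<^sub>R d))\<bar> \<le> norm d * (\<epsilon> / norm d)"
          using Ebound(2)[of "t *\<^sub>R d"] t(4) nd by (intro mult_left_mono) auto
        hence "norm d * \<bar>snd (E (t *\<^sub>R d))\<bar> \<le> \<epsilon>" using nd by simp
        moreover have "norm d * - snd (E (t *\<^sub>R d)) \<le> norm d * \<bar>snd (E (t *\<^sub>R d))\<bar>"
          by (rule mult_left_mono[OF abs_ge_minus_self]) simp
        ultimately show "U \<le> max D1 D2 + \<epsilon>" using key[OF t(1-3)] by linarith
      qed
      show ?thesis using L U unfolding L_def U_def D1_def D2_def d_def
        by (simp add: ivl_le_def ivl_gHsub_def)
    qed
  qed
  have uniq: "G = A" if G: "G \<in> gH_subdiff X F xb" for G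
  proof -
    have "G $ i = A $ i" for i
    proof -
      obtain g1 g2 where g: "G $ i = (g1, g2)" by (cases "G $ i")
      obtain a1 a2 where a: "A $ i = (a1, a2)" by (cases "A $ i")
      have gok: "g1 \<le> g2" using G g unfolding gH_subdiff_def by (auto simp: ivl_ok_def dest: spec[of _ i])
      have aok: "a1 \<le> a2" using Aok a by (auto simp: ivl_ok_def dest: spec[of _ i])
      have sub: "ivl_le (ivl_scale s (G $ i)) (ivl_gHsub (F (xb + s *\<^sub>R axis i 1)) (F xb))"
        if "\<bar>s\<bar> < \<delta>" for s
      proof -
        have "xb + s *\<^sub>R axis i 1 \<in> X" using inX that by simp
        hence "ivl_le (ivl_dot (s *\<^sub>R axis i 1) G) (ivl_gHsub (F (xb + s *\<^sub>R axis i 1)) (F xb))"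
          using G unfolding gH_subdiff_def by auto
        thus ?thesis by (simp add: ivl_dot_axis)
      qed
      have bnd: "a1 - \<epsilon> \<le> g1 \<and> g1 \<le> a1 + \<epsilon> \<and> a2 - \<epsilon> \<le> g2 \<and> g2 \<le> a2 + \<epsilon>" if e: "\<epsilon> > 0" for \<epsilon>
      proof -
        obtain h where h: "h > 0" "\<forall>d. 0 < norm d \<and> norm d < h \<longrightarrow> ivl_norm (E d) < \<epsilon>"
          using Elim e by blast
        define s where "s = min h \<delta> / 2"
        have s: "s > 0" "s < h" "s < \<delta>" using h dpos unfolding s_def by auto
        have Ep: "\<bar>fst (E (s *\<^sub>R axis i 1))\<bar> < \<epsilon>" "\<bar>snd (E (s *\<^sub>R axis i 1))\<bar> < \<epsilon>"
          using h(2)[rule_format, of "s *\<^sub>R axis i 1"] s Ebound[of "s *\<^sub>R axis i 1"] by auto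
        have En: "\<bar>fst (E ((-s) *\<^sub>R axis i 1))\<bar> < \<epsilon>" "\<bar>snd (E ((-s) *\<^sub>R axis i 1))\<bar> < \<epsilon>"
          using h(2)[rule_format, of "(-s) *\<^sub>R axis i 1"] s Ebound[of "(-s) *\<^sub>R axis i 1"] by auto
        have P: "s * g1 \<le> s * a1 + s * fst (E (s *\<^sub>R axis i 1)) \<and> s * g2 \<le> s * a2 + s * snd (E (s *\<^sub>R axis i 1))"
        proof -
          have m1: "s * g1 \<le> s * g2" "s * a1 \<le> s * a2" using s gok aok by (simp_all add: mult_left_mono)
          have sc: "ivl_scale s (G $ i) = (s*g1, s*g2)" unfolding g ivl_scale_def
            using m1 by (simp add: min_absorb1 max_absorb2)
          have ma: "min (s * a1) (s * a2) = s * a1" "max (s * a1) (s * a2) = s * a2" "\<bar>s\<bar> = s"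
            using m1 s by (simp_all add: min_absorb1 max_absorb2)
          show ?thesis using sub[of s] axR[of s i] s unfolding sc ivl_le_def a fst_conv snd_conv ma by simp
        qed
        have N: "-s * g2 \<le> -s * a2 + s * fst (E ((-s) *\<^sub>R axis i 1)) \<and> -s * g1 \<le> -s * a1 + s * snd (E ((-s) *\<^sub>R axis i 1))"
        proof -
          have m1: "-s * g2 \<le> -s * g1" "-s * a2 \<le> -s * a1" using s gok aok by (simp_all add: mult_left_mono_neg)
          have sc: "ivl_scale (-s) (G $ i) = (-s*g2, -s*g1)" unfolding g ivl_scale_def
            using m1 by (simp add: min_absorb2 max_absorb1)
          have ma: "min (-s * a1) (-s * a2) = -s * a2" "max (-s * a1) (-s * a2) = -s * a1" "\<bar>-s\<bar> = s"
            using m1 s by (simp_all add: min_absorb2 max_absorb1)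
          have "-s < \<delta>" "\<bar>-s\<bar> < \<delta>" using s by auto
          thus ?thesis using sub[of "-s"] axR[of "-s" i] unfolding sc ivl_le_def a fst_conv snd_conv ma by simp
        qed
        have P': "g1 \<le> a1 + fst (E (s *\<^sub>R axis i 1)) \<and> g2 \<le> a2 + snd (E (s *\<^sub>R axis i 1))"
          using P s canc1 by blast
        have N': "a2 - fst (E ((-s) *\<^sub>R axis i 1)) \<le> g2 \<and> a1 - snd (E ((-s) *\<^sub>R axis i 1)) \<le> g1"
          using N s canc2 by blast
        show ?thesis using P' N' Ep En by linarith
      qed
      have "g1 \<le> a1" by (rule field_le_epsilon) (use bnd in blast)
      moreover have "a1 \<le> g1" by (rule field_le_epsilon) (use bnd in force)
      moreover have "g2 \<le> a2" by (rule field_le_epsilon) (use bnd in blast)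
      moreover have "a2 \<le> g2" by (rule field_le_epsilon) (use bnd in force)
      ultimately have "g1 = a1" "g2 = a2" by auto
      thus ?thesis using g a by simp
    qed
    thus ?thesis by (simp add: vec_eq_iff)
  qed
  show ?thesis unfolding grad using inA uniq by blast
qed

end
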